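(* For all $n \geq 0$: (i) $a(a(n)) = 2a(n)$; (ii) $b(b(n)) = 2b(n)$; (iii) $a(b(n)) = 2b(n)+1$; (iv) $b(a(n)) = 2a(n)+1$; (v) $a(a(n)) = b(a(n)) - 1$; (vi) $b(b(n)) = a(b(n)) - 1$; (vii) $a(n) - b(n) = 1 - 2t(n)$, in particular $a(n)-b(n) \in \{1,-1\}$; (viii) $a(b(n)) - b(a(n)) = 4t(n) - 2$, in particular $a(b(n)) - b(a(n)) \in \{2,-2\}$.
   Context: The Thue–Morse sequence $(t(n))_{n\geq 0}$ is defined by $t(0)=0$, $t(2n)=t(n)$, $t(2n+1)=1-t(n)$. A nonnegative integer is odious if the sum of its binary digits is odd and evil if it is even. $(a(n))_{n\geq0}$ is the increasing sequence of odious numbers and $(b(n))_{n\geq 0}$ the increasing sequence of evil numbers, both indexed from $0$ (so $a(0)=1, a(1)=2,\ldots$ and $b(0)=0, b(1)=3, \ldots$). *)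

theory Defs
  imports Main "HOL-Library.Infinite_Set"
begin

fun tm :: "nat \<Rightarrow> nat" where
  "tm n = (if n = 0 then 0 else if even n then tm (n div 2) else 1 - tm (n div 2))"

fun bitsum :: "nat \<Rightarrow> nat" where
  "bitsum n = (if n = 0 then 0 else n mod 2 + bitsum (n div 2))"

definition odious :: "nat \<Rightarrow> bool" where
  "odious n \<longleftrightarrow> odd (bitsum n)"

definition evil :: "nat \<Rightarrow> bool" where
  "evil n \<longleftrightarrow> even (bitsum n)"

text \<open>Increasing enumerations, indexed from 0.\<close>
definition oda :: "nat \<Rightarrow> nat" where
  "oda = enumerate {n. odious n}"

definition evb :: "nat \<Rightarrow> nat" where
  "evb = enumerate {n. evil n}"

end

theory Submission
  imports Defs
begin

declare tm.simps[simp del] bitsum.simps[simp del]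

lemma tm_0[simp]: "tm 0 = 0" by (subst tm.simps) simp
lemma bitsum_0[simp]: "bitsum 0 = 0" by (subst bitsum.simps) simp

lemma tm_le1: "tm n \<le> 1"
  by (induction n rule: tm.induct) (subst tm.simps, auto)

lemma tm_double: "tm (2*n) = tm n"
  by (subst tm.simps) auto

lemma tm_double1: "tm (2*n+1) = 1 - tm n"
  by (subst tm.simps) auto

lemma bitsum_tm: "bitsum n mod 2 = tm n"
proof (induction n rule: less_induct)
  case (less n)
  show ?case
  proof (cases "n = 0")
    case True then show ?thesis by simp
  next
    case False
    have ih: "bitsum (n div 2) mod 2 = tm (n div 2)" using less False by simp
    have b: "bitsum n = n mod 2 + bitsum (n div 2)" using False by (subst bitsum.simps) simp
    have t: "tm n = (if even n then tm (n div 2) else 1 - tm (n div 2))"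
      using False by (subst tm.simps) simp
    have "tm (n div 2) = 0 \<or> tm (n div 2) = 1" using tm_le1[of "n div 2"] by linarith
    then show ?thesis
    proof
      assume z: "tm (n div 2) = 0"
      then have e: "even (bitsum (n div 2))" using ih by presburger
      show ?thesis
      proof (cases "even n")
        case True then show ?thesis using b t z e by presburger
      next
        case False then show ?thesis using b t z e by presburger
      qed
    next
      assume z: "tm (n div 2) = 1"
      then have e: "odd (bitsum (n div 2))" using ih by presburger
      show ?thesis
      proof (cases "even n")
        case True then show ?thesis using b t z e by presburger
      next
        case False then show ?thesis using b t z e by presburger
      qed
    qed
  qed
qed

lemma tm_pair1: "(tm (2*n) = 1) \<noteq> (tm (2*n+1) = 1)"
proof -
  have "tm n = 0 \<or> tm n = 1" using tm_le1[of n] by linarith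
  then show ?thesis unfolding tm_double tm_double1 by auto
qed

lemma tm_pair0: "(tm (2*n) = 0) \<noteq> (tm (2*n+1) = 0)"
proof -
  have "tm n = 0 \<or> tm n = 1" using tm_le1[of n] by linarith
  then show ?thesis unfolding tm_double tm_double1 by auto
qed

lemma odious_tm: "odious k \<longleftrightarrow> tm k = 1"
  using bitsum_tm[of k] tm_le1[of k] unfolding odious_def by presburger

lemma evil_tm: "evil k \<longleftrightarrow> tm k = 0"
  using bitsum_tm[of k] tm_le1[of k] unfolding evil_def by presburger

lemma enum_pairs:
  fixes S :: "nat set"
  assumes h: "\<And>n. (2*n \<in> S) \<noteq> (2*n+1 \<in> S)"
  shows "enumerate S n = (if 2*n \<in> S then 2*n else 2*n+1)"
proof -
  define f where "f n = (if 2*n \<in> S then 2*n else 2*n+1)" for n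
  have fS: "f n \<in> S" for n using h[of n] by (auto simp: f_def)
  have uniq: "s \<in> S \<Longrightarrow> 2*m \<le> s \<Longrightarrow> s \<le> 2*m+1 \<Longrightarrow> s = f m" for s m
  proof -
    assume a: "s \<in> S" "2*m \<le> s" "s \<le> 2*m+1"
    then have "s = 2*m \<or> s = 2*m+1" by linarith
    then show "s = f m" using h[of m] a(1) by (auto simp: f_def)
  qed
  have inf: "infinite S"
    unfolding infinite_nat_iff_unbounded_le
  proof
    fix m show "\<exists>k\<ge>m. k \<in> S" using fS[of m] by (intro exI[of _ "f m"]) (auto simp: f_def)
  qed
  show ?thesis unfolding f_def[symmetric]
  proof (induction n)
    case 0
    have "(LEAST s. s \<in> S) = f 0"
    proof (rule Least_equality)
      show "f 0 \<in> S" by (rule fS)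
      fix y assume "y \<in> S"
      then show "f 0 \<le> y" using uniq[of y 0] by (cases "y \<le> 1") (auto simp: f_def)
    qed
    then show ?case by (simp add: enumerate_0)
  next
    case (Suc n)
    have "(LEAST s. s \<in> S \<and> f n < s) = f (Suc n)"
    proof (rule Least_equality)
      show "f (Suc n) \<in> S \<and> f n < f (Suc n)" using fS[of "Suc n"] by (simp add: f_def)
      fix y assume y: "y \<in> S \<and> f n < y"
      show "f (Suc n) \<le> y"
      proof (rule ccontr)
        assume "\<not> f (Suc n) \<le> y"
        hence "y < f (Suc n)" by simp
        moreover have "2*n \<le> f n" "f (Suc n) \<le> 2*n+3" by (auto simp: f_def)
        ultimately consider "y \<le> 2*n+1" | "2*(Suc n) \<le> y \<and> y \<le> 2*(Suc n)+1" using y by (cases "y \<le> 2*n+1") auto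
        then show False
        proof cases
          case 1 then show False using uniq[of y n] y \<open>2*n \<le> f n\<close> by auto
        next
          case 2 then show False using uniq[of y "Suc n"] y \<open>y < f (Suc n)\<close> by auto
        qed
      qed
    qed
    then show ?case using enumerate_Suc''[OF inf, of n] Suc by simp
  qed
qed

lemma oda_eq: "oda n = 2*n + 1 - tm n"
proof -
  have "oda n = (if 2*n \<in> {k. odious k} then 2*n else 2*n+1)"
    unfolding oda_def
    by (rule enum_pairs) (use tm_pair1 in \<open>simp add: odious_tm\<close>)
  then show ?thesis using tm_le1[of n] by (auto simp: odious_tm tm_double)
qed

lemma evb_eq: "evb n = 2*n + tm n"
proof -
  have "evb n = (if 2*n \<in> {k. evil k} then 2*n else 2*n+1)"
    unfolding evb_def
    by (rule enum_pairs) (use tm_pair0 in \<open>simp add: evil_tm\<close>)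
  then show ?thesis using tm_le1[of n] by (auto simp: evil_tm tm_double)
qed

lemma tm_oda: "tm (oda n) = 1"
proof -
  have "tm n = 0 \<or> tm n = 1" using tm_le1[of n] by linarith
  then show ?thesis
  proof
    assume "tm n = 0" then show ?thesis unfolding oda_eq using tm_double1[of n] by simp
  next
    assume "tm n = 1" then show ?thesis unfolding oda_eq using tm_double[of n] by simp
  qed
qed

lemma tm_evb: "tm (evb n) = 0"
proof -
  have "tm n = 0 \<or> tm n = 1" using tm_le1[of n] by linarith
  then show ?thesis
  proof
    assume "tm n = 0" then show ?thesis unfolding evb_eq using tm_double[of n] by simp
  next
    assume "tm n = 1" then show ?thesis unfolding evb_eq using tm_double1[of n] by simp
  qed
qed

theorem corollary3:
  fixes n :: nat
  shows "(oda (oda n) = 2 * oda n)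
    \<and> (evb (evb n) = 2 * evb n)
    \<and> (oda (evb n) = 2 * evb n + 1)
    \<and> (evb (oda n) = 2 * oda n + 1)
    \<and> (int (oda (oda n)) = int (evb (oda n)) - 1)
    \<and> (int (evb (evb n)) = int (oda (evb n)) - 1)
    \<and> (int (oda n) - int (evb n) = 1 - 2 * int (tm n))
    \<and> (int (oda n) - int (evb n) \<in> {1, -1})
    \<and> (int (oda (evb n)) - int (evb (oda n)) = 4 * int (tm n) - 2)
    \<and> (int (oda (evb n)) - int (evb (oda n)) \<in> {2, -2})"
proof -
  have a1: "oda (oda n) = 2 * oda n" using oda_eq[of "oda n"] tm_oda[of n] by simp
  have a2: "evb (evb n) = 2 * evb n" using evb_eq[of "evb n"] tm_evb[of n] by simp
  have a3: "oda (evb n) = 2 * evb n + 1" using oda_eq[of "evb n"] tm_evb[of n] by simp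
  have a4: "evb (oda n) = 2 * oda n + 1" using evb_eq[of "oda n"] tm_oda[of n] by simp
  have t: "tm n = 0 \<or> tm n = 1" using tm_le1[of n] by linarith
  show ?thesis using a1 a2 a3 a4 t oda_eq[of n] evb_eq[of n] by auto
qed

end
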